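(* Let $M=(S,R,V)$ and $M'=(S',R',V')$ be finite epistemic models for the same finite set of agents $A$ and set of atoms $P$, such that only finitely many atoms are relevant in $M\cup M'$, and let $s\in S$, $s'\in S'$. Assume $(s,s)\in R(a)$ for every agent $a\in A$, and assume $M$ is a bisimulation contraction. Let $\mathsf{U}'_r=(S',R',\mathsf{pre},\mathsf{post})$ be the update model with event set $S'$, accessibility relations $R'(a)$, $\mathsf{pre}(t')=\delta_{(M,s)}$ for all $t'\in S'$, and, for every relevant atom $p$, $\mathsf{post}(t')(p)=\top$ if $t'\in V'(p)$ and $\bot$ otherwise (irrelevant atoms unchanged). Then $M\otimes\mathsf{U}'_r$ is isomorphic to $M'$.
   Context: An epistemic model is $M=(S,R,V)$ with $S$ a nonempty set, $R:A\to\wp(S\times S)$, $V:P\to\wp(S)$. An atom is relevant in a model if its valuation is neither empty nor the whole domain; "relevant in $M\cup M'$" refers to the disjoint union, so an irrelevant atom has the same constant value throughout both models. Bisimulation is the standard notion (atoms agree on linked states, forth and back conditions for each agent's relation); a bisimulation contraction is a model in which any two bisimilar states are identical. The language $\mathcal{L}$ has atoms, $\neg$, $\wedge$, modalities $[a]$, common knowledge modalities $[B^*]$ and update modalities $[\mathsf{U},\mathsf{e}]$. For a finite pointed model $(M,u)$, $\delta_{(M,u)}$ is a characteristic formula: for all formulas $\psi$, $(M,u)\models\psi$ iff $\delta_{(M,u)}\models\psi$. An update model $\mathsf{U}=(\mathsf{E},\mathsf{R},\mathsf{pre},\mathsf{post})$ has finite nonempty event set $\mathsf{E}$, relations $\mathsf{R}(a)\subseteq\mathsf{E}\times\mathsf{E}$,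 preconditions $\mathsf{pre}(\mathsf{e})\in\mathcal{L}$ and postconditions $\mathsf{post}(\mathsf{e}):P\to\mathcal{L}$ differing from the identity on finitely many atoms. The product $M\otimes\mathsf{U}$ has domain $\{(t,\mathsf{f}) : (M,t)\models\mathsf{pre}(\mathsf{f})\}$, $((t,\mathsf{f}),(u,\mathsf{g}))$ in the relation for $a$ iff $(t,u)\in R(a)$ and $(\mathsf{f},\mathsf{g})\in\mathsf{R}(a)$, and $(t,\mathsf{f})$ satisfies $p$ iff $(M,t)\models\mathsf{post}(\mathsf{f})(p)$. *)

theory Defs
  imports Main
begin

record ('a, 'p, 's) emodel =
  dom :: "'s set"
  rel :: "'a \<Rightarrow> ('s \<times> 's) set"
  val :: "'p \<Rightarrow> 's set"

definition epi_model :: "('a, 'p, 's) emodel \<Rightarrow> bool" where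
  "epi_model M \<longleftrightarrow> dom M \<noteq> {} \<and> (\<forall>a. rel M a \<subseteq> dom M \<times> dom M) \<and> (\<forall>p. val M p \<subseteq> dom M)"

definition finite_epi_model :: "('a, 'p, 's) emodel \<Rightarrow> bool" where
  "finite_epi_model M \<longleftrightarrow> epi_model M \<and> finite (dom M)"

text \<open>Update models occurring inside formulas have events drawn from nat:
  event set, relations, preconditions, postconditions, designated event.\<close>

datatype ('a, 'p) fm =
    Atom 'p
  | Neg "('a, 'p) fm"
  | Conj "('a, 'p) fm" "('a, 'p) fm"
  | K 'a "('a, 'p) fm"
  | CK "'a set" "('a, 'p) fm"
  | Upd "nat set" "'a \<Rightarrow> (nat \<times> nat) set" "nat \<Rightarrow> ('a, 'p) fm" "nat \<Rightarrow> 'p \<Rightarrow> ('a, 'p) fm" nat "('a, 'p) fm"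

primrec wf_fm :: "('a, 'p) fm \<Rightarrow> bool" where
  "wf_fm (Atom p) = True"
| "wf_fm (Neg \<phi>) = wf_fm \<phi>"
| "wf_fm (Conj \<phi> \<psi>) = (wf_fm \<phi> \<and> wf_fm \<psi>)"
| "wf_fm (K a \<phi>) = wf_fm \<phi>"
| "wf_fm (CK B \<phi>) = wf_fm \<phi>"
| "wf_fm (Upd E Rl pr po e \<phi>) =
     (finite E \<and> E \<noteq> {} \<and> e \<in> E \<and> (\<forall>a. Rl a \<subseteq> E \<times> E)
      \<and> (\<forall>f\<in>E. finite {p. po f p \<noteq> Atom p})
      \<and> (\<forall>f\<in>E. (\<lambda>x. wf_fm x) (pr f)) \<and> (\<forall>f\<in>E. \<forall>p. (\<lambda>x. wf_fm x) (po f p)) \<and> wf_fm \<phi>)"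

text \<open>Semantics.  To allow nested products without changing the state type,
  states are pairs of an original state and the list of events executed so far.\<close>


definition uprod ::
  "('a, 'p, 's \<times> nat list) emodel \<Rightarrow> nat set \<Rightarrow> ('a \<Rightarrow> (nat \<times> nat) set)
    \<Rightarrow> (nat \<Rightarrow> ('a, 'p, 's \<times> nat list) emodel \<Rightarrow> 's \<times> nat list \<Rightarrow> bool)
    \<Rightarrow> (nat \<Rightarrow> 'p \<Rightarrow> ('a, 'p, 's \<times> nat list) emodel \<Rightarrow> 's \<times> nat list \<Rightarrow> bool)
    \<Rightarrow> ('a, 'p, 's \<times> nat list) emodel" where
  "uprod M E Rl P Q =
    (let D = {(t, es @ [f]) | t es f. (t, es) \<in> dom M \<and> f \<in> E \<and> P f M (t, es)} in
     \<lparr> dom = D,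
       rel = (\<lambda>a. {((t, es @ [f]), (u, fs @ [g])) | t es f u fs g.
                    (t, es @ [f]) \<in> D \<and> (u, fs @ [g]) \<in> D \<and>
                    ((t, es), (u, fs)) \<in> rel M a \<and> (f, g) \<in> Rl a}),
       val = (\<lambda>p. {(t, es @ [f]) | t es f. (t, es @ [f]) \<in> D \<and> Q f p M (t, es)}) \<rparr>)"

primrec sat :: "('a, 'p) fm \<Rightarrow> ('a, 'p, 's \<times> nat list) emodel \<Rightarrow> 's \<times> nat list \<Rightarrow> bool" where
  "sat (Atom p) = (\<lambda>M w. w \<in> val M p)"
| "sat (Neg \<phi>) = (\<lambda>M w. \<not> sat \<phi> M w)"
| "sat (Conj \<phi> \<psi>) = (\<lambda>M w. sat \<phi> M w \<and> sat \<psi> M w)"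
| "sat (K a \<phi>) = (\<lambda>M w. \<forall>v. (w, v) \<in> rel M a \<longrightarrow> sat \<phi> M v)"
| "sat (CK B \<phi>) = (\<lambda>M w. \<forall>v. (w, v) \<in> (\<Union>a\<in>B. rel M a)\<^sup>* \<longrightarrow> sat \<phi> M v)"
| "sat (Upd E Rl pr po e \<phi>) = (\<lambda>M w.
     (\<lambda>x. sat x) (pr e) M w \<longrightarrow>
     sat \<phi> (uprod M E Rl (\<lambda>f. (\<lambda>x. sat x) (pr f)) (\<lambda>f p. (\<lambda>x. sat x) (po f p))) (fst w, snd w @ [e]))"

definition lift :: "('a, 'p, 's) emodel \<Rightarrow> ('a, 'p, 's \<times> nat list) emodel" where
  "lift M = \<lparr> dom = (\<lambda>t. (t, [])) ` dom M,
             rel = (\<lambda>a. {((t, []), (u, [])) | t u. (t, u) \<in> rel M a}),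
             val = (\<lambda>p. (\<lambda>t. (t, [])) ` val M p) \<rparr>"

definition models :: "('a, 'p, 's) emodel \<Rightarrow> 's \<Rightarrow> ('a, 'p) fm \<Rightarrow> bool" where
  "models M s \<phi> \<longleftrightarrow> sat \<phi> (lift M) (s, [])"

definition Top :: "('a, 'p) fm" where
  "Top = Neg (Conj (Atom undefined) (Neg (Atom undefined)))"

definition Bot :: "('a, 'p) fm" where
  "Bot = Neg Top"

definition bisimulation :: "('a, 'p, 's) emodel \<Rightarrow> ('a, 'p, 't) emodel \<Rightarrow> ('s \<times> 't) set \<Rightarrow> bool" where
  "bisimulation M N Z \<longleftrightarrow> Z \<subseteq> dom M \<times> dom N \<and>
    (\<forall>(s, t) \<in> Z.
       (\<forall>p. s \<in> val M p \<longleftrightarrow> t \<in> val N p) \<and>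
       (\<forall>a s'. (s, s') \<in> rel M a \<longrightarrow> (\<exists>t'. (t, t') \<in> rel N a \<and> (s', t') \<in> Z)) \<and>
       (\<forall>a t'. (t, t') \<in> rel N a \<longrightarrow> (\<exists>s'. (s, s') \<in> rel M a \<and> (s', t') \<in> Z)))"

definition bisimilar :: "('a, 'p, 's) emodel \<Rightarrow> 's \<Rightarrow> ('a, 'p, 't) emodel \<Rightarrow> 't \<Rightarrow> bool" where
  "bisimilar M s N t \<longleftrightarrow> (\<exists>Z. bisimulation M N Z \<and> (s, t) \<in> Z)"

definition bisim_contraction :: "('a, 'p, 's) emodel \<Rightarrow> bool" where
  "bisim_contraction M \<longleftrightarrow> (\<forall>s\<in>dom M. \<forall>t\<in>dom M. bisimilar M s M t \<longrightarrow> s = t)"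

definition relevant :: "('a, 'p, 's) emodel \<Rightarrow> ('a, 'p, 't) emodel \<Rightarrow> 'p \<Rightarrow> bool" where
  "relevant M N p \<longleftrightarrow>
     \<not> (val M p \<inter> dom M = {} \<and> val N p \<inter> dom N = {}) \<and>
     \<not> (dom M \<subseteq> val M p \<and> dom N \<subseteq> val N p)"

record ('a, 'p, 'e) umodel =
  ev :: "'e set"
  urel :: "'a \<Rightarrow> ('e \<times> 'e) set"
  pre :: "'e \<Rightarrow> ('a, 'p) fm"
  post :: "'e \<Rightarrow> 'p \<Rightarrow> ('a, 'p) fm"

definition update_model :: "('a, 'p, 'e) umodel \<Rightarrow> bool" where
  "update_model U \<longleftrightarrow> finite (ev U) \<and> ev U \<noteq> {} \<and> (\<forall>a. urel U a \<subseteq> ev U \<times> ev U)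
     \<and> (\<forall>e\<in>ev U. wf_fm (pre U e) \<and> (\<forall>p. wf_fm (post U e p)) \<and> finite {p. post U e p \<noteq> Atom p})"

definition product :: "('a, 'p, 's) emodel \<Rightarrow> ('a, 'p, 'e) umodel \<Rightarrow> ('a, 'p, 's \<times> 'e) emodel" where
  "product M U =
    (let D = {(t, f). t \<in> dom M \<and> f \<in> ev U \<and> models M t (pre U f)} in
     \<lparr> dom = D,
       rel = (\<lambda>a. {((t, f), (u, g)). (t, f) \<in> D \<and> (u, g) \<in> D \<and> (t, u) \<in> rel M a \<and> (f, g) \<in> urel U a}),
       val = (\<lambda>p. {(t, f). (t, f) \<in> D \<and> models M t (post U f p)}) \<rparr>)"

definition isomorphic :: "('a, 'p, 's) emodel \<Rightarrow> ('a, 'p, 't) emodel \<Rightarrow> bool" where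
  "isomorphic M N \<longleftrightarrow> (\<exists>f. bij_betw f (dom M) (dom N) \<and>
     (\<forall>a. \<forall>x\<in>dom M. \<forall>y\<in>dom M. (x, y) \<in> rel M a \<longleftrightarrow> (f x, f y) \<in> rel N a) \<and>
     (\<forall>p. \<forall>x\<in>dom M. x \<in> val M p \<longleftrightarrow> f x \<in> val N p))"

definition Ur :: "('a, 'p, 's) emodel \<Rightarrow> ('a, 'p, 't) emodel \<Rightarrow> ('a, 'p) fm \<Rightarrow> ('a, 'p, 't) umodel" where
  "Ur M N \<delta> = \<lparr> ev = dom N, urel = rel N, pre = (\<lambda>_. \<delta>),
     post = (\<lambda>t p. if relevant M N p then (if t \<in> val N p then Top else Bot) else Atom p) \<rparr>"

end

theory Submission
  imports Defs
begin

lemma models_Atom: "models M t (Atom p) \<longleftrightarrow> t \<in> val M p"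
  by (auto simp: models_def lift_def)

lemma models_Neg: "models M t (Neg \<phi>) \<longleftrightarrow> \<not> models M t \<phi>"
  by (simp add: models_def)

lemma models_Conj: "models M t (Conj \<phi> \<psi>) \<longleftrightarrow> models M t \<phi> \<and> models M t \<psi>"
  by (simp add: models_def)

lemma models_K: "models M t (K a \<phi>) \<longleftrightarrow> (\<forall>u. (t, u) \<in> rel M a \<longrightarrow> models M u \<phi>)"
  by (auto simp: models_def lift_def)

lemma models_Top: "models M t Top"
  by (simp add: models_def Top_def)

lemma models_Bot: "\<not> models M t Bot"
  by (simp add: models_def Bot_def Top_def)

lemma models_foldr: "models M t (foldr Conj fs Top) \<longleftrightarrow> (\<forall>f\<in>set fs. models M t f)"
  by (induction fs) (auto simp: models_Conj models_Top)

lemma wf_foldr: "(\<forall>f\<in>set fs. wf_fm f) \<Longrightarrow> wf_fm (foldr Conj fs Top)"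
  by (induction fs) (auto simp: Top_def)

definition eqv :: "('a, 'p, 's) emodel \<Rightarrow> 's \<Rightarrow> 's \<Rightarrow> bool" where
  "eqv M t u \<longleftrightarrow> (\<forall>\<psi>. wf_fm \<psi> \<longrightarrow> (models M t \<psi> \<longleftrightarrow> models M u \<psi>))"

lemma forth:
  assumes fin: "finite_epi_model M" and tu: "eqv M t u" and tt': "(t, t') \<in> rel M a"
  shows "\<exists>u'. (u, u') \<in> rel M a \<and> eqv M t' u'"
proof (rule ccontr)
  assume no: "\<not> ?thesis"
  define S where "S = {u'. (u, u') \<in> rel M a}"
  have "S \<subseteq> dom M" using fin unfolding finite_epi_model_def epi_model_def S_def by blast
  hence "finite S" using fin unfolding finite_epi_model_def using finite_subset by blast
  then obtain l where l: "set l = S" using finite_list by blast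
  have ex: "\<exists>\<psi>. wf_fm \<psi> \<and> models M t' \<psi> \<and> \<not> models M u' \<psi>" if "u' \<in> S" for u'
  proof -
    from no that have "\<not> eqv M t' u'" unfolding S_def by blast
    then obtain \<psi> where w: "wf_fm \<psi>" and d: "models M t' \<psi> \<noteq> models M u' \<psi>"
      unfolding eqv_def by blast
    show ?thesis
    proof (cases "models M t' \<psi>")
      case True then show ?thesis using w d by blast
    next
      case False then show ?thesis using w d by (intro exI[of _ "Neg \<psi>"]) (auto simp: models_Neg)
    qed
  qed
  define ch where "ch u' = (SOME \<psi>. wf_fm \<psi> \<and> models M t' \<psi> \<and> \<not> models M u' \<psi>)" for u'
  have ch: "wf_fm (ch u') \<and> models M t' (ch u') \<and> \<not> models M u' (ch u')" if "u' \<in> S" for u'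
    unfolding ch_def using someI_ex[OF ex[OF that]] .
  define \<Phi> where "\<Phi> = foldr Conj (map ch l) Top"
  have w: "wf_fm \<Phi>" unfolding \<Phi>_def using ch l by (auto intro!: wf_foldr)
  have "models M t' \<Phi>" unfolding \<Phi>_def using ch l by (auto simp: models_foldr)
  hence "\<not> models M t (K a (Neg \<Phi>))" using tt' by (auto simp: models_K models_Neg)
  moreover have "models M u (K a (Neg \<Phi>))"
    unfolding models_K models_Neg \<Phi>_def models_foldr using ch l unfolding S_def by auto
  ultimately show False using tu w unfolding eqv_def by (auto)
qed

lemma eqv_bisim:
  assumes fin: "finite_epi_model M" and t: "t \<in> dom M" and u: "u \<in> dom M" and e: "eqv M t u"
  shows "bisimilar M t M u"
proof -
  define Z where "Z = {(x, y). x \<in> dom M \<and> y \<in> dom M \<and> eqv M x y}"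
  have dm: "\<And>x y a. (x, y) \<in> rel M a \<Longrightarrow> y \<in> dom M"
    using fin unfolding finite_epi_model_def epi_model_def by blast
  have sym: "eqv M x y \<Longrightarrow> eqv M y x" for x y unfolding eqv_def by blast
  have "bisimulation M M Z"
    unfolding bisimulation_def
  proof (intro conjI ballI)
    show "Z \<subseteq> dom M \<times> dom M" unfolding Z_def by auto
  next
    fix z assume "z \<in> Z"
    then obtain x y where z: "z = (x, y)" and x: "x \<in> dom M" and y: "y \<in> dom M" and xy: "eqv M x y"
      unfolding Z_def by auto
    have "\<forall>p. x \<in> val M p \<longleftrightarrow> y \<in> val M p"
      using xy unfolding eqv_def by (metis models_Atom wf_fm.simps(1))
    moreover have "\<forall>a x'. (x, x') \<in> rel M a \<longrightarrow> (\<exists>y'. (y, y') \<in> rel M a \<and> (x', y') \<in> Z)"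
      using forth[OF fin xy] dm unfolding Z_def by blast
    moreover have "\<forall>a y'. (y, y') \<in> rel M a \<longrightarrow> (\<exists>x'. (x, x') \<in> rel M a \<and> (x', y') \<in> Z)"
      using forth[OF fin sym[OF xy]] dm sym unfolding Z_def by blast
    ultimately show "case z of (s, t) \<Rightarrow>
       (\<forall>p. s \<in> val M p \<longleftrightarrow> t \<in> val M p) \<and>
       (\<forall>a s'. (s, s') \<in> rel M a \<longrightarrow> (\<exists>t'. (t, t') \<in> rel M a \<and> (s', t') \<in> Z)) \<and>
       (\<forall>a t'. (t, t') \<in> rel M a \<longrightarrow> (\<exists>s'. (s, s') \<in> rel M a \<and> (s', t') \<in> Z))"
      using z by simp
  qed
  moreover have "(t, u) \<in> Z" using t u e unfolding Z_def by auto
  ultimately show ?thesis unfolding bisimilar_def by blast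
qed

lemma dom_product: "dom (product M U) = {(t, f). t \<in> dom M \<and> f \<in> ev U \<and> models M t (pre U f)}"
  by (simp add: product_def Let_def)

lemma rel_product: "rel (product M U) a = {((t, f), (u, g)). (t, f) \<in> dom (product M U) \<and> (u, g) \<in> dom (product M U) \<and> (t, u) \<in> rel M a \<and> (f, g) \<in> urel U a}"
  by (simp add: product_def Let_def)

lemma val_product: "val (product M U) p = {(t, f). (t, f) \<in> dom (product M U) \<and> models M t (post U f p)}"
  by (simp add: product_def Let_def)

lemma Ur_simps: "ev (Ur M N d) = dom N" "urel (Ur M N d) = rel N" "pre (Ur M N d) f = d"
  "post (Ur M N d) f p = (if relevant M N p then (if f \<in> val N p then Top else Bot) else Atom p)"
  by (simp_all add: Ur_def)

theorem corollary1:
  fixes M :: "('a::finite, 'p, 's) emodel" and M' :: "('a, 'p, 's') emodel"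
    and s :: 's and s' :: 's' and \<delta> :: "('a, 'p) fm"
  assumes "finite_epi_model M" and "finite_epi_model M'"
    and "finite {p. relevant M M' p}"
    and "s \<in> dom M" and "s' \<in> dom M'"
    and "\<forall>a. (s, s) \<in> rel M a"
    and "bisim_contraction M"
    and "wf_fm \<delta>"
    and "\<forall>\<psi>. wf_fm \<psi> \<longrightarrow>
           (models M s \<psi> \<longleftrightarrow>
            (\<forall>(N :: ('a, 'p, 's) emodel) v. epi_model N \<and> v \<in> dom N \<and> models N v \<delta> \<longrightarrow> models N v \<psi>))"
  shows "isomorphic (product M (Ur M M' \<delta>)) M'"
proof -
  have em: "epi_model M" using assms(1) unfolding finite_epi_model_def by blast
  have sd: "models M s \<delta>" using spec[OF assms(9), of \<delta>] assms(8) by blast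
  have only: "t = s" if t: "t \<in> dom M" and td: "models M t \<delta>" for t
  proof -
    have imp: "models M t \<psi>" if "wf_fm \<psi>" "models M s \<psi>" for \<psi>
    proof -
      have h: "models M s \<psi> \<longleftrightarrow>
            (\<forall>(N :: ('a, 'p, 's) emodel) v. epi_model N \<and> v \<in> dom N \<and> models N v \<delta> \<longrightarrow> models N v \<psi>)"
        using mp[OF spec[OF assms(9), of \<psi>] that(1)] .
      have "\<forall>(N :: ('a, 'p, 's) emodel) v. epi_model N \<and> v \<in> dom N \<and> models N v \<delta> \<longrightarrow> models N v \<psi>"
        using h that(2) by (rule iffD1)
      then have "epi_model M \<and> t \<in> dom M \<and> models M t \<delta> \<longrightarrow> models M t \<psi>"
        by (rule spec[of _ t, OF spec[of _ M]])
      then show ?thesis using em t td by simp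
    qed
    have "eqv M s t" unfolding eqv_def
    proof (intro allI impI)
      fix \<psi> :: "('a, 'p) fm" assume w: "wf_fm \<psi>"
      show "models M s \<psi> \<longleftrightarrow> models M t \<psi>"
        using imp[OF w] imp[of "Neg \<psi>"] w by (auto simp: models_Neg)
    qed
    hence "bisimilar M s M t" by (rule eqv_bisim[OF assms(1) assms(4) t])
    moreover have "bisimilar M s M t \<longrightarrow> s = t"
      using assms(7) assms(4) t unfolding bisim_contraction_def by (elim ballE) auto
    ultimately show ?thesis by simp
  qed
  let ?P = "product M (Ur M M' \<delta>)"
  have D: "dom ?P = (\<lambda>f. (s, f)) ` dom M'"
  proof
    show "dom ?P \<subseteq> (\<lambda>f. (s, f)) ` dom M'"
      unfolding dom_product Ur_simps using only by auto
    show "(\<lambda>f. (s, f)) ` dom M' \<subseteq> dom ?P"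
      unfolding dom_product Ur_simps using sd assms(4) by auto
  qed
  show ?thesis unfolding isomorphic_def
  proof (intro exI[of _ snd] conjI allI ballI)
    show "bij_betw snd (dom ?P) (dom M')" unfolding D bij_betw_def inj_on_def by (auto simp: image_image)
  next
    fix a x y assume xD: "x \<in> dom ?P" and yD: "y \<in> dom ?P"
    then obtain f g where x: "x = (s, f)" and y: "y = (s, g)"
      unfolding D by auto
    show "(x, y) \<in> rel ?P a \<longleftrightarrow> (snd x, snd y) \<in> rel M' a"
      using xD yD assms(6) unfolding rel_product Ur_simps x y by auto
  next
    fix p x assume xD: "x \<in> dom ?P"
    then obtain f where x: "x = (s, f)" and f: "f \<in> dom M'" unfolding D by auto
    show "x \<in> val ?P p \<longleftrightarrow> snd x \<in> val M' p"
    proof (cases "relevant M M' p")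
      case True
      then show ?thesis using xD unfolding val_product Ur_simps x
        by (auto simp: models_Top models_Bot)
    next
      case False
      then have "s \<in> val M p \<longleftrightarrow> f \<in> val M' p" using f assms(4) unfolding relevant_def by blast
      then show ?thesis using xD False unfolding val_product Ur_simps x
        by (auto simp: models_Atom)
    qed
  qed
qed

end
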